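(* For every integer $q\ge 5$ there exists an $\mathcal{SOS}_q(2)$ of period $\frac{q(q-4)}{4}$ if $q\equiv 0\pmod 4$, $\frac{(q+1)(q-1)}{4}$ if $q\equiv 1\pmod 4$, $\frac{q(q-2)}{4}$ if $q\equiv 2\pmod 4$, and $\frac{(q+1)(q-3)}{4}$ if $q\equiv 3\pmod 4$.
   Context: For a periodic sequence $S=(s_i)$ over $\mathbb{Z}_q$ write $\mathbf{s}_n(i)=(s_i,\ldots,s_{i+n-1})$; $\mathbf{u}^R$ denotes the reverse of a tuple and $-\mathbf{u}$ its termwise negative. An $\mathcal{SOS}_q(n)$ is a periodic sequence of period $m$ over $\mathbb{Z}_q$ such that $\mathbf{s}_n(i)=\mathbf{s}_n(j)$ implies $i\equiv j\pmod m$, and $\mathbf{s}_n(i)\neq\mathbf{s}_n(j)^R$ and $\mathbf{s}_n(i)\neq-\mathbf{s}_n(j)^R$ for all $i,j$. *)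

theory Defs
  imports Main
begin

definition window :: "(nat \<Rightarrow> int) \<Rightarrow> nat \<Rightarrow> nat \<Rightarrow> int list" where
  "window s n i = map (\<lambda>k. s (i + k)) [0..<n]"

definition neg_mod :: "int \<Rightarrow> int list \<Rightarrow> int list" where
  "neg_mod q u = map (\<lambda>x. (- x) mod q) u"

definition is_SOS :: "int \<Rightarrow> nat \<Rightarrow> nat \<Rightarrow> (nat \<Rightarrow> int) \<Rightarrow> bool" where
  "is_SOS q n m s \<longleftrightarrow>
     0 < m \<and>
     (\<forall>i. s i \<in> {0..<q}) \<and>
     (\<forall>i. s (i + m) = s i) \<and>
     (\<forall>i j. window s n i = window s n j \<longrightarrow> i mod m = j mod m) \<and>
     (\<forall>i j. window s n i \<noteq> rev (window s n j)) \<and>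
     (\<forall>i j. window s n i \<noteq> rev (neg_mod q (window s n j)))"

end

theory Submission
  imports Defs
begin


definition cls :: "int \<Rightarrow> int \<Rightarrow> int" where "cls q x = min x (q - x)"

lemma window2: "window s 2 i = [s i, s (Suc i)]"
  by (simp add: window_def numeral_2_eq_2)

lemma sos_crit:
  fixes s :: "nat \<Rightarrow> int" and q :: int and P :: "int \<Rightarrow> int \<Rightarrow> bool"
  assumes m: "0 < m" and rng: "\<forall>i. s i \<in> {0..<q}" and per: "\<forall>i. s (i+m) = s i"
  and inj: "\<forall>i j. s i = s j \<longrightarrow> s (Suc i) = s (Suc j) \<longrightarrow> i mod m = j mod m"
  and Ps: "\<forall>i. P (s i) (s (Suc i))"
  and Pa: "\<forall>x y. P x y \<longrightarrow> \<not> P y x"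
  and Pn: "\<forall>x y. P x y \<longrightarrow> \<not> P ((-y) mod q) ((-x) mod q)"
  shows "is_SOS q 2 m s"
  unfolding is_SOS_def
proof (intro conjI allI impI)
  show "0 < m" by fact
  show "s i \<in> {0..<q}" for i using rng by blast
  show "s (i+m) = s i" for i using per by blast
  show "window s 2 i = window s 2 j \<Longrightarrow> i mod m = j mod m" for i j
  proof -
    assume "window s 2 i = window s 2 j"
    then have "s i = s j" "s (Suc i) = s (Suc j)" by (simp_all add: window2)
    then show ?thesis using inj by blast
  qed
  show "window s 2 i \<noteq> rev (window s 2 j)" for i j
  proof
    assume "window s 2 i = rev (window s 2 j)"
    then have "s i = s (Suc j)" "s (Suc i) = s j" by (simp_all add: window2)
    then show False using Ps[rule_format, of i] Pa[rule_format, of "s i" "s (Suc i)"] Ps[rule_format, of j] by simp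
  qed
  show "window s 2 i \<noteq> rev (neg_mod q (window s 2 j))" for i j
  proof
    assume "window s 2 i = rev (neg_mod q (window s 2 j))"
    then have "s i = (- s (Suc j)) mod q" "s (Suc i) = (- s j) mod q" by (simp_all add: window2 neg_mod_def)
    then show False using Ps[rule_format, of i] Pn[rule_format, of "s j" "s (Suc j)"] Ps[rule_format, of j] by simp
  qed
qed

lemma cls_neg: "0 \<le> x \<Longrightarrow> x < q \<Longrightarrow> cls q ((-x) mod q) = cls q x"
proof (cases "x = 0")
  case True then show ?thesis by simp
next
  case False
  assume "0 \<le> x" "x < q"
  then have "(-x) mod q = q - x" using False
    by (simp add: zmod_zminus1_eq_if)
  then show ?thesis by (simp add: cls_def min.commute)
qed

lemma neg_self_zero:
  assumes "0 \<le> x" "x < q" "(-x) mod q = x" "2 * cls q x < q"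
  shows "x = 0"
proof (rule ccontr)
  assume "x \<noteq> 0"
  then have "(-x) mod q = q - x" using assms by (simp add: zmod_zminus1_eq_if)
  then have "x + x = q" using assms(3) by simp
  then show False using assms(4) by (simp add: cls_def)
qed

lemma negneg: "0 \<le> (x::int) \<Longrightarrow> x < q \<Longrightarrow> (- ((-x) mod q)) mod q = x"
  using mod_minus_eq[of "-x" q] by simp

lemma doubling:
  fixes w :: "nat \<Rightarrow> int" and q :: int and M :: nat and P :: "int \<Rightarrow> int \<Rightarrow> bool"
  assumes M: "0 < M"
  and rng: "\<And>t. t \<le> M \<Longrightarrow> 0 \<le> w t \<and> w t < q"
  and small: "\<And>t. t \<le> M \<Longrightarrow> 2 * cls q (w t) < q"
  and wM: "w M = (- w 0) mod q"
  and Pw: "\<And>t. t < M \<Longrightarrow> P (w t) (w (Suc t))"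
  and inj: "\<And>t t'. t < M \<Longrightarrow> t' < M \<Longrightarrow> cls q (w t) = cls q (w t') \<Longrightarrow> cls q (w (Suc t)) = cls q (w (Suc t')) \<Longrightarrow> t = t'"
  and Pa: "\<forall>x y. P x y \<longrightarrow> \<not> P y x"
  and Pn: "\<forall>x y. P x y \<longrightarrow> \<not> P ((-y) mod q) ((-x) mod q)"
  and Pneg: "\<And>x y. P x y \<Longrightarrow> P ((-x) mod q) ((-y) mod q)"
  shows "is_SOS q 2 (2*M) (\<lambda>i. if i mod (2*M) < M then w (i mod (2*M)) else (- w (i mod (2*M) - M)) mod q)"
    (is "is_SOS q 2 (2*M) ?s")
proof -
  have q0: "0 < q" using rng[of 0] by linarith
  define ng where "ng x = (-x) mod q" for x :: int
  define A where "A i = (if i mod (2*M) < M then i mod (2*M) else i mod (2*M) - M)" for i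
  define N where "N i = (i mod (2*M) \<ge> M)" for i
  have A: "A i < M" for i
  proof -
    have b: "i mod (2*M) < 2*M" using M by simp
    show ?thesis
    proof (cases "i mod (2*M) < M")
      case True thus ?thesis by (simp add: A_def)
    next
      case False
      then have "A i = i mod (2*M) - M" by (simp add: A_def)
      with b show ?thesis by arith
    qed
  qed
  have key: "?s i = (if N i then ng (w (A i)) else w (A i)) \<and> ?s (Suc i) = (if N i then ng (w (Suc (A i))) else w (Suc (A i)))" for i
  proof -
    define j where "j = i mod (2*M)"
    have j2: "j < 2*M" using M j_def by simp
    show ?thesis
    proof (cases "j < M")
      case True
      show ?thesis
      proof (cases "Suc j < M")
        case True
        have "Suc i mod (2*M) = Suc j" using j2 True j_def by (simp add: mod_Suc)
        then show ?thesis using True \<open>j < M\<close> j_def A_def N_def by simp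
      next
        case False
        then have "Suc j = M" using \<open>j < M\<close> by simp
        then have "Suc i mod (2*M) = M" using j_def j2 by (simp add: mod_Suc)
        then show ?thesis using \<open>Suc j = M\<close> \<open>j < M\<close> j_def wM ng_def A_def N_def by simp
      qed
    next
      case False
      show ?thesis
      proof (cases "Suc j < 2*M")
        case True
        have "Suc i mod (2*M) = Suc j" using True j_def by (simp add: mod_Suc)
        then show ?thesis using True False j_def ng_def A_def N_def by (simp add: Suc_diff_le)
      next
        case False2: False
        then have "Suc j = 2*M" using j2 by simp
        then have "Suc i mod (2*M) = 0" using j_def by (simp add: mod_Suc)
        moreover have "Suc (j - M) = M" using \<open>Suc j = 2*M\<close> M by simp
        moreover have "ng (w M) = w 0" using wM negneg[of "w 0" q] rng[of 0] ng_def by simp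
        ultimately show ?thesis using False j_def ng_def A_def N_def by simp
      qed
    qed
  qed
  show ?thesis
  proof (rule sos_crit[where P=P])
    show "0 < 2*M" using M by simp
    show "\<forall>i. ?s i \<in> {0..<q}"
    proof
      fix i
      have "i mod (2*M) < 2*M" using M by simp
      then show "?s i \<in> {0..<q}" using rng[of "i mod (2*M)"] rng[of "i mod (2*M) - M"] q0 by auto
    qed
    show "\<forall>i. ?s (i + 2*M) = ?s i" by simp
    show "\<forall>x y. P x y \<longrightarrow> \<not> P y x" by fact
    show "\<forall>x y. P x y \<longrightarrow> \<not> P ((-y) mod q) ((-x) mod q)" by fact
    show "\<forall>i. P (?s i) (?s (Suc i))"
    proof
      fix i
      have p: "P (w (A i)) (w (Suc (A i)))" using Pw A by blast
      show "P (?s i) (?s (Suc i))"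
      proof (cases "N i")
        case True
        then show ?thesis using key[of i] Pneg[OF p] ng_def by simp
      next
        case False
        then show ?thesis using key[of i] p by simp
      qed
    qed
    show "\<forall>i j. ?s i = ?s j \<longrightarrow> ?s (Suc i) = ?s (Suc j) \<longrightarrow> i mod (2*M) = j mod (2*M)"
    proof (intro allI impI)
      fix i j
      assume e1: "?s i = ?s j" and e2: "?s (Suc i) = ?s (Suc j)"
      have cn: "cls q (ng (w t)) = cls q (w t)" if "t \<le> M" for t
        using cls_neg[of "w t" q] rng[OF that] ng_def by simp
      have Ai: "A i < M" "A j < M" using A by auto
      have c1: "cls q (?s i) = cls q (w (A i))" using key[of i] cn[of "A i"] Ai by simp
      have c2: "cls q (?s (Suc i)) = cls q (w (Suc (A i)))" using key[of i] cn[of "Suc (A i)"] Ai by simp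
      have d1: "cls q (?s j) = cls q (w (A j))" using key[of j] cn[of "A j"] Ai by simp
      have d2: "cls q (?s (Suc j)) = cls q (w (Suc (A j)))" using key[of j] cn[of "Suc (A j)"] Ai by simp
      have ab: "A i = A j" using inj[of "A i" "A j"] Ai c1 c2 d1 d2 e1 e2 by simp
      show "i mod (2*M) = j mod (2*M)"
      proof (cases "N i = N j")
        case True
        then show ?thesis using ab A_def N_def by (simp split: if_splits)
      next
        case False
        have "ng (w (A i)) = w (A i) \<and> ng (w (Suc (A i))) = w (Suc (A i))"
          using False e1 e2 key[of i] key[of j] ab by (cases "N i") auto
        then have "w (A i) = 0" "w (Suc (A i)) = 0"
          using neg_self_zero[of "w (A i)" q] neg_self_zero[of "w (Suc (A i))" q]
            rng[of "A i"] rng[of "Suc (A i)"] small[of "A i"] small[of "Suc (A i)"] Ai ng_def by auto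
        moreover have "P (w (A i)) (w (Suc (A i)))" using Pw Ai by blast
        ultimately show ?thesis using Pa by auto
      qed
    qed
  qed
qed



definition tri :: "nat \<Rightarrow> nat" where "tri k = (\<Sum>i<k. Suc i)"

lemma tri_0[simp]: "tri 0 = 0" by (simp add: tri_def)
lemma tri_Suc: "tri (Suc k) = tri k + Suc k" by (simp add: tri_def)
lemma tri2: "2 * tri k = k * (k+1)"
  by (induction k) (simp_all add: tri_Suc algebra_simps)

definition rr :: "nat \<Rightarrow> nat \<Rightarrow> nat" where
  "rr D t = ((t div D) * tri D + tri (t mod D)) mod (2*D+1)"

lemma rr_lt: "rr D t < 2*D+1" by (simp add: rr_def)
lemma rr_0[simp]: "rr D 0 = 0" by (simp add: rr_def)

lemma rr_per: assumes "0 < D" shows "rr D (t + (2*D+1)*D) = rr D t"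
proof -
  have "(t + (2*D+1)*D) div D = t div D + (2*D+1)" using div_mult_self1[of D t "2*D+1"] assms by simp
  moreover have "(t + (2*D+1)*D) mod D = t mod D" by (rule mod_mult_self1)
  ultimately have "rr D (t + (2*D+1)*D) = ((t div D) * tri D + tri (t mod D) + (2*D+1) * tri D) mod (2*D+1)"
    by (simp add: rr_def algebra_simps)
  also have "\<dots> = rr D t" unfolding rr_def by (rule mod_mult_self2)
  finally show ?thesis .
qed

lemma rr_Suc_nat: assumes "0 < D"
  shows "rr D (Suc t) = ((t div D) * tri D + tri (t mod D) + Suc (t mod D)) mod (2*D+1)"
proof (cases "Suc (t mod D) < D")
  case True
  then have "Suc t div D = t div D" "Suc t mod D = Suc (t mod D)"
    by (simp_all add: div_Suc mod_Suc)
  then show ?thesis by (simp add: rr_def tri_Suc ac_simps)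
next
  case False
  then have k: "Suc (t mod D) = D" using mod_less_divisor[OF assms, of t] by linarith
  then have "Suc t div D = Suc (t div D)" "Suc t mod D = 0"
    by (simp_all add: div_Suc mod_Suc)
  moreover have "tri D = tri (t mod D) + Suc (t mod D)" using tri_Suc[of "t mod D"] k by simp
  ultimately show ?thesis by (simp add: rr_def algebra_simps)
qed

lemma rr_step: assumes "0 < D"
  shows "(int (rr D (Suc t)) - int (rr D t)) mod int (2*D+1) = int (t mod D) + 1"
proof -
  define X where "X = (t div D) * tri D + tri (t mod D)"
  have a: "rr D (Suc t) = (X + Suc (t mod D)) mod (2*D+1)" using rr_Suc_nat[OF assms] X_def by simp
  have b: "rr D t = X mod (2*D+1)" by (simp add: rr_def X_def)
  have "(int (rr D (Suc t)) - int (rr D t)) mod int (2*D+1)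
      = (int (X + Suc (t mod D)) mod int (2*D+1) - int X mod int (2*D+1)) mod int (2*D+1)"
    by (simp only: a b of_nat_mod)
  also have "\<dots> = (int (X + Suc (t mod D)) - int X) mod int (2*D+1)" by (simp add: mod_diff_eq)
  also have "\<dots> = (int (t mod D) + 1) mod int (2*D+1)" by (simp add: add.commute)
  also have "\<dots> = int (t mod D) + 1"
  proof -
    have "t mod D < D" using assms by simp
    then show ?thesis by (simp add: mod_pos_pos_trivial)
  qed
  finally show ?thesis .
qed

lemma rr_inj: assumes "0 < D" and km: "t mod D = t' mod D" and e: "rr D t = rr D t'"
  shows "t mod ((2*D+1)*D) = t' mod ((2*D+1)*D)"
proof -
  define n where "n = int (2*D+1)"
  define u where "u = int (t div D)"
  define u' where "u' = int (t' div D)"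
  define T where "T = int (tri D)"
  define c where "c = int (tri (t mod D))"
  have "int (rr D t) = (u * T + c) mod n" by (simp add: rr_def u_def T_def c_def n_def of_nat_mod)
  moreover have "int (rr D t') = (u' * T + c) mod n" by (simp add: rr_def u'_def T_def c_def n_def of_nat_mod km)
  ultimately have "(u * T + c) mod n = (u' * T + c) mod n" using e by simp
  then have "n dvd (u * T + c) - (u' * T + c)" by (simp add: mod_eq_dvd_iff)
  then have d1: "n dvd (u - u') * T" by (simp add: algebra_simps)
  have T8: "8 * T = n * n - 1"
  proof -
    have "2 * tri D = D * (D+1)" by (rule tri2)
    then have "int (2 * tri D) = int (D * (D+1))" by (simp only:)
    then have "2 * T = int D * (int D + 1)" unfolding T_def by (simp add: distrib_left)
    then show ?thesis unfolding n_def by (simp add: algebra_simps)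
  qed
  have "n dvd (u - u') * (8 * T)" using dvd_mult2[OF d1, of 8] by (simp add: ac_simps)
  moreover have "(u - u') * (8 * T) = (u - u') * (n * n) - (u - u')" by (simp add: T8 right_diff_distrib)
  ultimately have "n dvd (u - u') * (n * n) - (u - u')" by simp
  moreover have "n dvd (u - u') * (n * n)" by simp
  ultimately have "n dvd (u - u') * (n * n) - ((u - u') * (n * n) - (u - u'))" by (rule dvd_diff[rotated])
  then have dn: "n dvd (u - u')" by simp
  have tt: "int t - int t' = (u - u') * int D"
  proof -
    have "int t = int (t div D * D + t mod D)" by simp
    also have "\<dots> = u * int D + int (t mod D)" by (simp only: u_def of_nat_add of_nat_mult)
    finally have 1: "int t = u * int D + int (t mod D)" .
    have "int t' = int (t' div D * D + t' mod D)" by simp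
    also have "\<dots> = u' * int D + int (t mod D)" by (simp only: u'_def km of_nat_add of_nat_mult)
    finally have 2: "int t' = u' * int D + int (t mod D)" .
    show ?thesis using 1 2 by (simp add: algebra_simps)
  qed
  have nd: "n * int D dvd (u - u') * int D" using dn by simp
  have e1: "int ((2*D+1)*D) = n * int D" by (simp add: n_def algebra_simps)
  have "int ((2*D+1)*D) dvd int t - int t'" unfolding e1 tt by (rule nd)
  then have "int t mod int ((2*D+1)*D) = int t' mod int ((2*D+1)*D)" by (simp add: mod_eq_dvd_iff)
  then have "int (t mod ((2*D+1)*D)) = int (t' mod ((2*D+1)*D))" by (simp only: of_nat_mod)
  then show ?thesis by simp
qed



lemma tour_anti:
  fixes a b n :: int
  assumes "n = 2 * int D + 1" "(b - a) mod n \<in> {1..int D}" "(a - b) mod n \<in> {1..int D}"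
  shows False
proof -
  have "((b - a) mod n + (a - b) mod n) mod n = ((b - a) + (a - b)) mod n" by (simp add: mod_add_eq)
  then have "((b - a) mod n + (a - b) mod n) mod n = 0" by simp
  moreover have "0 < (b - a) mod n + (a - b) mod n" "(b - a) mod n + (a - b) mod n < n" using assms by auto
  ultimately show False by (simp add: mod_pos_pos_trivial)
qed

lemma cls_pos: "0 \<le> c \<Longrightarrow> 2 * c < Q \<Longrightarrow> cls Q c = c" by (simp add: cls_def)
lemma cls_negv: "0 < c \<Longrightarrow> 2 * c < Q \<Longrightarrow> cls Q (Q - c) = c" by (simp add: cls_def)

definition Pe :: "int \<Rightarrow> nat \<Rightarrow> int \<Rightarrow> int \<Rightarrow> bool" where
  "Pe Q D x y \<longleftrightarrow> 0 \<le> x \<and> x < Q \<and> 0 \<le> y \<and> y < Q \<and> cls Q x \<le> 2 * int D \<and> cls Q y \<le> 2 * int D \<and>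
     (cls Q y - cls Q x) mod (2 * int D + 1) \<in> {1..int D}"

lemma caseA:
  assumes D: "1 \<le> D" and q: "4*D+1 \<le> q"
  shows "\<exists>s. is_SOS (int q) 2 (2*((2*D+1)*D)) s"
proof -
  define Q where "Q = int q"
  define M where "M = (2*D+1)*D"
  define w where "w t = int (rr D t)" for t
  have D0: "0 < D" using D by simp
  have M0: "0 < M" using D0 by (simp add: M_def)
  have Q: "4 * int D + 1 \<le> Q" using q by (simp add: Q_def)
  have rrb: "int (rr D t) \<le> 2 * int D" for t using rr_lt[of D t] by simp
  have clw: "cls Q (w t) = int (rr D t)" for t using rrb[of t] Q by (simp add: cls_pos w_def)
  have stp: "(int (rr D (Suc t)) - int (rr D t)) mod (2 * int D + 1) = int (t mod D) + 1" for t
    using rr_step[OF D0, of t] by (simp add: add.commute)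
  have tmd: "t mod D < D" for t using D0 by simp
  have "is_SOS Q 2 (2*M) (\<lambda>i. if i mod (2*M) < M then w (i mod (2*M)) else (- w (i mod (2*M) - M)) mod Q)"
  proof (rule doubling[where P="Pe Q D"])
    show "0 < M" by fact
    show "0 \<le> w t \<and> w t < Q" for t using rrb[of t] Q by (simp add: w_def)
    show "2 * cls Q (w t) < Q" for t using rrb[of t] Q clw[of t] by simp
    show "w M = (- w 0) mod Q" using rr_per[OF D0, of 0] by (simp add: w_def M_def)
    show "Pe Q D (w t) (w (Suc t))" for t
      using stp[of t] tmd[of t] clw[of t] clw[of "Suc t"] rrb[of t] rrb[of "Suc t"] Q
      unfolding Pe_def by (simp add: w_def)
    show "t = t'" if "t < M" "t' < M" "cls Q (w t) = cls Q (w t')" "cls Q (w (Suc t)) = cls Q (w (Suc t'))" for t t'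
    proof -
      have e1: "rr D t = rr D t'" using that(3) clw by simp
      have e2: "rr D (Suc t) = rr D (Suc t')" using that(4) clw by simp
      have "int (t mod D) + 1 = int (t' mod D) + 1" using stp[of t] stp[of t'] e1 e2 by simp
      then have "t mod D = t' mod D" by simp
      then have "t mod M = t' mod M" using rr_inj[OF D0 _ e1] M_def by simp
      then show ?thesis using that(1,2) by simp
    qed
    show "\<forall>x y. Pe Q D x y \<longrightarrow> \<not> Pe Q D y x"
      unfolding Pe_def using tour_anti[of "2 * int D + 1" D] by blast
    show "\<forall>x y. Pe Q D x y \<longrightarrow> \<not> Pe Q D ((-y) mod Q) ((-x) mod Q)"
    proof (intro allI impI notI)
      fix x y assume a: "Pe Q D x y" and b: "Pe Q D ((-y) mod Q) ((-x) mod Q)"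
      have "cls Q ((-y) mod Q) = cls Q y" "cls Q ((-x) mod Q) = cls Q x"
        using a cls_neg[of x Q] cls_neg[of y Q] unfolding Pe_def by auto
      then show False using a b tour_anti[of "2 * int D + 1" D "cls Q x" "cls Q y"] unfolding Pe_def by simp
    qed
    show "Pe Q D ((-x) mod Q) ((-y) mod Q)" if "Pe Q D x y" for x y
    proof -
      have "cls Q ((-y) mod Q) = cls Q y" "cls Q ((-x) mod Q) = cls Q x"
        using that cls_neg[of x Q] cls_neg[of y Q] unfolding Pe_def by auto
      moreover have "0 < Q" using that unfolding Pe_def by simp
      ultimately show ?thesis using that unfolding Pe_def by simp
    qed
  qed
  then show ?thesis unfolding Q_def M_def by blast
qed



definition sg :: "int \<Rightarrow> int \<Rightarrow> bool" where "sg Q x \<longleftrightarrow> 2 * x < Q"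

definition tr :: "nat \<Rightarrow> int \<Rightarrow> int \<Rightarrow> bool" where
  "tr D a b \<longleftrightarrow> (b - a) mod (2 * int D + 1) \<in> {1..int D}"

definition Po :: "int \<Rightarrow> nat \<Rightarrow> int \<Rightarrow> int \<Rightarrow> bool" where
  "Po Q D x y \<longleftrightarrow> 0 \<le> x \<and> x < Q \<and> 0 \<le> y \<and> y < Q \<and> 2 * cls Q x < Q \<and> 2 * cls Q y < Q \<and>
     ((cls Q x \<noteq> 0 \<and> cls Q y \<noteq> 0 \<and> ((tr D (cls Q x) (cls Q y) \<and> sg Q x = sg Q y) \<or> (tr D (cls Q y) (cls Q x) \<and> sg Q x \<noteq> sg Q y)))
      \<or> (cls Q x = 0 \<and> cls Q y = int D - 1) \<or> (cls Q y = 0 \<and> cls Q x = 1))"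

lemma tr_anti: "tr D a b \<Longrightarrow> tr D b a \<Longrightarrow> False"
  unfolding tr_def using tour_anti[of "2 * int D + 1" D a b] by blast

lemma cls_zero: "0 \<le> x \<Longrightarrow> x < Q \<Longrightarrow> cls Q x = 0 \<longleftrightarrow> x = 0"
  by (auto simp: cls_def min_def)

lemma sg_neg:
  assumes "0 \<le> x" "x < Q" "cls Q x \<noteq> 0" "2 * cls Q x < Q"
  shows "sg Q ((-x) mod Q) = (\<not> sg Q x)"
proof -
  have x0: "x \<noteq> 0" using assms cls_zero by blast
  then have "(-x) mod Q = Q - x" using assms by (simp add: zmod_zminus1_eq_if)
  moreover have "2 * x \<noteq> Q" using assms(4) by (auto simp: cls_def min_def)
  ultimately show ?thesis by (auto simp: sg_def)
qed

lemma Po_anti: assumes "3 \<le> D" shows "Po Q D x y \<Longrightarrow> \<not> Po Q D y x"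
  unfolding Po_def using tr_anti assms by auto

lemma Po_neg:
  assumes "3 \<le> D" "Po Q D x y"
  shows "Po Q D ((-x) mod Q) ((-y) mod Q)" "\<not> Po Q D ((-y) mod Q) ((-x) mod Q)"
proof -
  have r: "0 \<le> x" "x < Q" "0 \<le> y" "y < Q" "2 * cls Q x < Q" "2 * cls Q y < Q" using assms(2) unfolding Po_def by auto
  have Q0: "0 < Q" using r by simp
  have c: "cls Q ((-y) mod Q) = cls Q y" "cls Q ((-x) mod Q) = cls Q x"
    using r cls_neg[of x Q] cls_neg[of y Q] by auto
  have s1: "cls Q x \<noteq> 0 \<Longrightarrow> sg Q ((-x) mod Q) = (\<not> sg Q x)" using sg_neg[of x Q] r by simp
  have s2: "cls Q y \<noteq> 0 \<Longrightarrow> sg Q ((-y) mod Q) = (\<not> sg Q y)" using sg_neg[of y Q] r by simp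
  have rr: "0 \<le> (-x) mod Q" "(-x) mod Q < Q" "0 \<le> (-y) mod Q" "(-y) mod Q < Q" using Q0 by auto
  show "Po Q D ((-x) mod Q) ((-y) mod Q)"
    using assms(2) c s1 s2 r rr unfolding Po_def by auto
  show "\<not> Po Q D ((-y) mod Q) ((-x) mod Q)"
    using assms c s1 s2 r rr tr_anti[of D "cls Q x" "cls Q y"] unfolding Po_def by auto
qed



lemma caseC:
  assumes D: "3 \<le> D" and q: "4*D+3 \<le> q"
  shows "\<exists>s. is_SOS (int q) 2 (2*(D + (2*D+1)*D)) s"
proof -
  define Q where "Q = int q"
  define M where "M = D + (2*D+1)*D"
  define w where "w t = (if t = 0 then 1 else if t = 1 then 0 else if t < D then
      (if odd (D - t) then int (D - t + 1) else Q - int (D - t + 1)) else Q - (int (rr D (t - D)) + 1))" for t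
  define cl where "cl t = (if t = 0 then 1 else if t = 1 then 0 else if t < D then int (D - t + 1) else int (rr D (t - D)) + 1)" for t
  have D0: "0 < D" using D by simp
  have M0: "0 < M" using D0 by (simp add: M_def)
  have Q: "4 * int D + 3 \<le> Q" using q by (simp add: Q_def)
  have rrb: "int (rr D t) \<le> 2 * int D" for t using rr_lt[of D t] by simp
  have stp: "(int (rr D (Suc t)) - int (rr D t)) mod (2 * int D + 1) = int (t mod D) + 1" for t
    using rr_step[OF D0, of t] by (simp add: add.commute)
  have tmd: "t mod D < D" for t using D0 by simp
  have clb: "1 \<le> cl t \<or> t = 1" "cl t \<le> 2 * int D + 1" "0 \<le> cl t" for t using rrb[of "t - D"] by (auto simp: cl_def)
  have wb: "2 \<le> t \<Longrightarrow> t < D \<Longrightarrow> w t = (if odd (D - t) then int (D - t + 1) else Q - int (D - t + 1))" for t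
    by (simp add: w_def)
  have clw: "cls Q (w t) = cl t" for t
  proof -
    consider "t = 0" | "t = 1" | "2 \<le> t \<and> t < D \<and> odd (D - t)" | "2 \<le> t \<and> t < D \<and> even (D - t)" | "D \<le> t" by linarith
    then show ?thesis
    proof cases
      case 1 then show ?thesis using Q by (simp add: w_def cl_def cls_def)
    next
      case 2 then show ?thesis using Q D by (simp add: w_def cl_def cls_def)
    next
      case 3
      have h: "odd (D - t)" using 3 by blast
      have "w t = (if odd (D - t) then int (D - t + 1) else Q - int (D - t + 1))" using 3 by (intro wb) auto
      also have "\<dots> = int (D - t + 1)" using h by (rule if_P)
      finally have "w t = int (D - t + 1)" .
      moreover have "cl t = int (D - t + 1)" using 3 by (simp add: cl_def)
      ultimately show ?thesis using Q 3 by (simp add: cls_pos)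
    next
      case 4
      have h: "\<not> odd (D - t)" using 4 by blast
      have "w t = (if odd (D - t) then int (D - t + 1) else Q - int (D - t + 1))" using 4 by (intro wb) auto
      also have "\<dots> = Q - int (D - t + 1)" using h by (rule if_not_P)
      finally have "w t = Q - int (D - t + 1)" .
      moreover have "cl t = int (D - t + 1)" using 4 by (simp add: cl_def)
      ultimately show ?thesis using Q 4 by (simp add: cls_negv)
    next
      case 5 then show ?thesis using Q rrb[of "t - D"] D by (simp add: w_def cl_def cls_negv)
    qed
  qed
  have wr: "0 \<le> w t \<and> w t < Q" for t using Q rrb[of "t - D"] by (auto simp: w_def)
  have sgb: "sg Q (w t) = odd (D - t)" if "2 \<le> t" "t < D" for t
  proof (cases "odd (D - t)")
    case True
    have "w t = int (D - t + 1)" unfolding wb[OF that] by (rule if_P[OF True])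
    then show ?thesis using Q that True by (simp add: sg_def)
  next
    case False
    have "w t = Q - int (D - t + 1)" unfolding wb[OF that] by (rule if_not_P[OF False])
    then show ?thesis using Q that False by (simp add: sg_def)
  qed
  have sgr: "D \<le> t \<Longrightarrow> \<not> sg Q (w t)" for t
    using Q rrb[of "t - D"] D by (auto simp: w_def sg_def)
  have sm: "2 * cl t < Q" for t using clb[of t] Q by linarith
  have "is_SOS Q 2 (2*M) (\<lambda>i. if i mod (2*M) < M then w (i mod (2*M)) else (- w (i mod (2*M) - M)) mod Q)"
  proof (rule doubling[where P="Po Q D"])
    show "0 < M" by fact
    show "0 \<le> w t \<and> w t < Q" for t by (rule wr)
    show "2 * cls Q (w t) < Q" for t using clw sm by simp
    show "w M = (- w 0) mod Q"
    proof -
      have "rr D (M - D) = 0" using rr_per[OF D0, of 0] by (simp add: M_def)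
      moreover have "\<not> M < D" "M \<noteq> 0" "M \<noteq> 1" using D by (auto simp: M_def)
      moreover have "(-1) mod Q = Q - 1" using Q by (simp add: zmod_zminus1_eq_if)
      ultimately show ?thesis by (simp add: w_def)
    qed
    show "Po Q D (w t) (w (Suc t))" if "t < M" for t
    proof -
      have base: "0 \<le> w t \<and> w t < Q \<and> 0 \<le> w (Suc t) \<and> w (Suc t) < Q \<and> 2 * cls Q (w t) < Q \<and> 2 * cls Q (w (Suc t)) < Q"
        using wr[of t] wr[of "Suc t"] sm[of t] sm[of "Suc t"] clw by simp
      consider "t = 0" | "t = 1" | "2 \<le> t \<and> Suc t < D" | "Suc t = D" | "D \<le> t" using D by linarith
      then show ?thesis
      proof cases
        case 1
        then show ?thesis using base clw[of 0] clw[of 1] D unfolding Po_def by (simp add: cl_def)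
      next
        case 2
        then show ?thesis using base clw[of 1] clw[of "Suc (Suc 0)"] D unfolding Po_def by (simp add: cl_def of_nat_diff)
      next
        case 3
        have a: "cl t = int (D - t + 1)" "cl (Suc t) = int (D - Suc t + 1)" using 3 by (auto simp: cl_def)
        have "cl t - cl (Suc t) = 1" using a 3 by simp
        then have "tr D (cl (Suc t)) (cl t)" using D by (simp add: tr_def)
        moreover have "sg Q (w t) \<noteq> sg Q (w (Suc t))" using sgb[of t] sgb[of "Suc t"] 3
          by (simp add: Suc_diff_Suc[symmetric])
        moreover have "cl t \<noteq> 0" "cl (Suc t) \<noteq> 0" using a 3 by auto
        ultimately show ?thesis using base clw unfolding Po_def by auto
      next
        case 4
        have a: "cl t = 2" "cl (Suc t) = 1" using 4 D by (auto simp: cl_def)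
        then have "tr D (cl (Suc t)) (cl t)" using D by (simp add: tr_def)
        moreover have "sg Q (w t)" "\<not> sg Q (w (Suc t))" using sgb[of t] sgr[of "Suc t"] 4 D by auto
        ultimately show ?thesis using base clw a unfolding Po_def by auto
      next
        case 5
        have a: "cl t = int (rr D (t - D)) + 1" "cl (Suc t) = int (rr D (Suc (t - D))) + 1" using 5 D by (auto simp: cl_def Suc_diff_le)
        have "(cl (Suc t) - cl t) mod (2 * int D + 1) = int ((t - D) mod D) + 1" using a stp[of "t - D"] by simp
        then have "tr D (cl t) (cl (Suc t))" using tmd[of "t - D"] by (simp add: tr_def)
        moreover have "\<not> sg Q (w t)" "\<not> sg Q (w (Suc t))" using sgr[of t] sgr[of "Suc t"] 5 by auto
        moreover have "cl t \<noteq> 0" "cl (Suc t) \<noteq> 0" using a by auto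
        ultimately show ?thesis using base clw unfolding Po_def by auto
      qed
    qed
    show "t = t'" if "t < M" "t' < M" "cls Q (w t) = cls Q (w t')" "cls Q (w (Suc t)) = cls Q (w (Suc t'))" for t t'
    proof -
      have e1: "cl t = cl t'" and e2: "cl (Suc t) = cl (Suc t')" using that clw by auto
      have c1: "cl 1 = 0" by (simp add: cl_def)
      have clr: "cl x = int (rr D (x - D)) + 1" if "D \<le> x" for x using that D by (simp add: cl_def)
      have z: "cl x = 0 \<Longrightarrow> x = 1" for x using clb(1)[of x] by auto
      have blk: "cl (Suc x) = cl x - 1" if "x < D" "x \<noteq> 1" for x
        using that D by (auto simp: cl_def of_nat_diff)
      have blkv: "x < D \<Longrightarrow> x \<noteq> 1 \<Longrightarrow> cl x = (if x = 0 then 1 else int (D - x + 1))" for x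
        by (simp add: cl_def)
      have rrs: "(cl (Suc x) - cl x) mod (2 * int D + 1) \<in> {1..int D}" if "D \<le> x" for x
      proof -
        have "cl x = int (rr D (x - D)) + 1" "cl (Suc x) = int (rr D (Suc (x - D))) + 1"
          using that D by (auto simp: cl_def Suc_diff_le)
        then have "(cl (Suc x) - cl x) mod (2 * int D + 1) = int ((x - D) mod D) + 1" using stp[of "x - D"] by simp
        then show ?thesis using tmd[of "x - D"] by simp
      qed
      have m0: "1 mod (2 * int D + 1) = 1" using D0 by simp
      have m1: "(-1) mod (2 * int D + 1) = 2 * int D" using m0 by (simp add: zmod_zminus1_eq_if)
      have mix: False if "x < D" "x \<noteq> 1" "D \<le> y" "cl x = cl y" "cl (Suc x) = cl (Suc y)" for x y
      proof -
        have "cl (Suc y) - cl y = -1" using blk[OF that(1,2)] that(4,5) by simp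
        then show False using rrs[OF that(3)] m1 D by simp
      qed
      consider "t = 1" | "t < D \<and> t \<noteq> 1" | "D \<le> t" by linarith
      then show ?thesis
      proof cases
        case 1 then show ?thesis using z[of t'] e1 c1 by simp
      next
        case 2
        consider "t' = 1" | "t' < D \<and> t' \<noteq> 1" | "D \<le> t'" by linarith
        then show ?thesis
        proof cases
          case 1 then show ?thesis using z[of t] e1 c1 by simp
        next
          case 3 then show ?thesis using mix[of t t'] 2 e1 e2 by blast
        next
          case b: 2
          have v1: "cl t = (if t = 0 then 1 else int (D - t + 1))" using blkv[of t] 2 by blast
          have v2: "cl t' = (if t' = 0 then 1 else int (D - t' + 1))" using blkv[of t'] b by blast
          have g: "x < D \<Longrightarrow> 2 \<le> int (D - x + 1)" for x by simp
          have h: "x < D \<Longrightarrow> y < D \<Longrightarrow> int (D - x + 1) = int (D - y + 1) \<Longrightarrow> x = y" for x y by simp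
          show ?thesis
          proof (cases "t = 0")
            case True
            note T = this
            show ?thesis
            proof (cases "t' = 0")
              case True then show ?thesis using T by simp
            next
              case False
              have "cl t = 1" using v1 T by simp
              moreover have "cl t' = int (D - t' + 1)" using v2 False by simp
              ultimately show ?thesis using g[of t'] b e1 by linarith
            qed
          next
            case False
            note F = this
            have ct: "cl t = int (D - t + 1)" using v1 F by simp
            show ?thesis
            proof (cases "t' = 0")
              case True
              have "cl t' = 1" using v2 True by simp
              then show ?thesis using g[of t] 2 e1 ct by linarith
            next
              case False
              have "cl t' = int (D - t' + 1)" using v2 False by simp
              then show ?thesis using h[of t t'] 2 b e1 ct by simp
            qed
          qed
        qed
      next
        case 3
        consider "t' = 1" | "t' < D \<and> t' \<noteq> 1" | "D \<le> t'" by linarith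
        then show ?thesis
        proof cases
          case 1 then show ?thesis using z[of t] e1 c1 by simp
        next
          case 2 then show ?thesis using mix[of t' t] 3 e1 e2 by auto
        next
          case b: 3
          have r1: "rr D (t - D) = rr D (t' - D)" using e1 clr[OF 3] clr[OF b] by simp
          have r2: "rr D (Suc t - D) = rr D (Suc t' - D)" using e2 clr[of "Suc t"] clr[of "Suc t'"] 3 b by simp
          then have r2: "rr D (Suc (t - D)) = rr D (Suc (t' - D))" using 3 b by (simp add: Suc_diff_le)
          have "int ((t - D) mod D) + 1 = int ((t' - D) mod D) + 1" using stp[of "t - D"] stp[of "t' - D"] r1 r2 by simp
          then have "(t - D) mod D = (t' - D) mod D" by simp
          then have "(t - D) mod ((2*D+1)*D) = (t' - D) mod ((2*D+1)*D)" using rr_inj[OF D0 _ r1] by simp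
          moreover have "t - D < (2*D+1)*D" "t' - D < (2*D+1)*D" using that(1,2) unfolding M_def by auto
          ultimately show ?thesis using 3 b by simp
        qed
      qed
    qed
    show "\<forall>x y. Po Q D x y \<longrightarrow> \<not> Po Q D y x" using Po_anti[OF D] by blast
    show "\<forall>x y. Po Q D x y \<longrightarrow> \<not> Po Q D ((-y) mod Q) ((-x) mod Q)" using Po_neg(2)[OF D] by blast
    show "Po Q D ((-x) mod Q) ((-y) mod Q)" if "Po Q D x y" for x y using Po_neg(1)[OF D that] .
  qed
  then show ?thesis unfolding Q_def M_def by blast
qed



lemma list_sos:
  fixes xs :: "int list" and q :: int
  defines "W \<equiv> map (\<lambda>k. (xs!k, xs!((k+1) mod length xs))) [0..<length xs]"
  assumes m: "length xs = m" "0 < m"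
  and r: "\<forall>x\<in>set xs. 0 \<le> x \<and> x < q"
  and d: "distinct W"
  and c: "\<forall>p \<in> set W. (snd p, fst p) \<notin> set W \<and> ((- snd p) mod q, (- fst p) mod q) \<notin> set W"
  shows "is_SOS q 2 m (\<lambda>i. xs ! (i mod m))"
proof (rule sos_crit[where P="\<lambda>x y. (x, y) \<in> set W"])
  have Wn: "W ! k = (xs ! k, xs ! ((k+1) mod m))" if "k < m" for k
    using that m by (simp add: W_def)
  have lW: "length W = m" using m by (simp add: W_def)
  have sW: "(xs ! (i mod m), xs ! (Suc i mod m)) = W ! (i mod m)" for i
    using Wn[of "i mod m"] m by (simp add: mod_Suc_eq)
  show "0 < m" by fact
  show "\<forall>i. xs ! (i mod m) \<in> {0..<q}" using r m by auto
  show "\<forall>i. xs ! ((i + m) mod m) = xs ! (i mod m)" by simp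
  show "\<forall>i. (xs ! (i mod m), xs ! (Suc i mod m)) \<in> set W"
    using sW lW m by (metis nth_mem mod_less_divisor)
  show "\<forall>i j. xs ! (i mod m) = xs ! (j mod m) \<longrightarrow> xs ! (Suc i mod m) = xs ! (Suc j mod m) \<longrightarrow> i mod m = j mod m"
  proof (intro allI impI)
    fix i j
    assume "xs ! (i mod m) = xs ! (j mod m)" "xs ! (Suc i mod m) = xs ! (Suc j mod m)"
    then have "W ! (i mod m) = W ! (j mod m)" using sW[of i] sW[of j] by simp
    then show "i mod m = j mod m" using d lW m by (simp add: nth_eq_iff_index_eq)
  qed
  show "\<forall>x y. (x, y) \<in> set W \<longrightarrow> (y, x) \<notin> set W" using c by fastforce
  show "\<forall>x y. (x, y) \<in> set W \<longrightarrow> ((- y) mod q, (- x) mod q) \<notin> set W" using c by fastforce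
qed

lemma sp7: "is_SOS (int 7) 2 8 (\<lambda>i. [0, 1, 2, 0, 3, 1, 4, 5] ! (i mod 8))"
  by (rule list_sos) code_simp+

lemma sp8: "is_SOS (int 8) 2 8 (\<lambda>i. [0, 1, 2, 0, 3, 1, 4, 6] ! (i mod 8))"
  by (rule list_sos) code_simp+

lemma sp11: "is_SOS (int 11) 2 24 (\<lambda>i. [0, 1, 2, 0, 3, 1, 4, 0, 5, 1, 6, 2, 3, 4, 2, 5, 3, 6, 4, 5, 7, 0, 10, 9] ! (i mod 24))"
  by (rule list_sos) code_simp+

lemma sp12: "is_SOS (int 12) 2 24 (\<lambda>i. [0, 1, 2, 0, 3, 1, 4, 0, 5, 1, 6, 0, 7, 1, 8, 0, 9, 1, 10, 3, 2, 4, 5, 10] ! (i mod 24))"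
  by (rule list_sos) code_simp+

theorem corollary3p10:
  fixes q :: nat
  assumes "q \<ge> 5"
  shows "\<exists>s. is_SOS (int q) 2
           (if q mod 4 = 0 then q * (q - 4) div 4
            else if q mod 4 = 1 then (q + 1) * (q - 1) div 4
            else if q mod 4 = 2 then q * (q - 2) div 4
            else (q + 1) * (q - 3) div 4) s"
proof -
  define D where "D = q div 4"
  have qD: "q = 4 * D + q mod 4" unfolding D_def by simp
  have "q mod 4 < 4" by simp
  then consider "q mod 4 = 0" | "q mod 4 = 1" | "q mod 4 = 2" | "q mod 4 = 3" by linarith
  then show ?thesis
  proof cases
    case 1
    define E where "E = D - 1"
    have q: "q = 4 * E + 4" using qD 1 assms unfolding E_def by simp
    have E1: "1 \<le> E" using assms q by simp
    have q4: "q - 4 = 4 * E" using q by simp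
    have "q * (q - 4) = 4 * (2 * (E + (2 * E + 1) * E))" unfolding q4 by (simp add: q algebra_simps)
    then have m: "q * (q - 4) div 4 = 2 * (E + (2 * E + 1) * E)" by simp
    have goal: "\<exists>s. is_SOS (int q) 2 (2 * (E + (2 * E + 1) * E)) s"
    proof -
      consider "E = 1" | "E = 2" | "3 \<le> E" using E1 by linarith
      then show ?thesis
      proof cases
        case 1 then show ?thesis using sp8 q by auto
      next
        case 2 then show ?thesis using sp12 q by auto
      next
        case 3 then show ?thesis using caseC[of E q] q by simp
      qed
    qed
    show ?thesis using goal m 1 by simp
  next
    case 2
    have q: "q = 4 * D + 1" using qD 2 by simp
    have D1: "1 \<le> D" using assms q by simp
    have "(q + 1) * (q - 1) = 4 * (2 * ((2 * D + 1) * D))" by (simp add: q algebra_simps)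
    then have m: "(q + 1) * (q - 1) div 4 = 2 * ((2 * D + 1) * D)" by simp
    show ?thesis using caseA[of D q] D1 q m 2 by simp
  next
    case 3
    have q: "q = 4 * D + 2" using qD 3 by simp
    have D1: "1 \<le> D" using assms q by simp
    have "q * (q - 2) = 4 * (2 * ((2 * D + 1) * D))" by (simp add: q algebra_simps)
    then have m: "q * (q - 2) div 4 = 2 * ((2 * D + 1) * D)" by simp
    show ?thesis using caseA[of D q] D1 q m 3 by simp
  next
    case 4
    have q: "q = 4 * D + 3" using qD 4 by simp
    have D1: "1 \<le> D" using assms q by simp
    have q3: "q - 3 = 4 * D" using q by simp
    have "(q + 1) * (q - 3) = 4 * (2 * (D + (2 * D + 1) * D))" unfolding q3 by (simp add: q algebra_simps)
    then have m: "(q + 1) * (q - 3) div 4 = 2 * (D + (2 * D + 1) * D)" by simp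
    have goal: "\<exists>s. is_SOS (int q) 2 (2 * (D + (2 * D + 1) * D)) s"
    proof -
      consider "D = 1" | "D = 2" | "3 \<le> D" using D1 by linarith
      then show ?thesis
      proof cases
        case 1 then show ?thesis using sp7 q by auto
      next
        case 2 then show ?thesis using sp11 q by auto
      next
        case 3 then show ?thesis using caseC[of D q] q by simp
      qed
    qed
    show ?thesis using goal m 4 by simp
  qed
qed

end
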